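(* Consider the distributed energy beamforming setting and protocol described in the context, with $M\ge 2$ energy transmitters, channel power gains $\beta_1,\dots,\beta_M>0$, channel phases $\theta_1,\dots,\theta_M\in[-\pi,\pi)$, transmit power $P>0$, and $N\ge1$ feedback intervals per transmitter, and let $\eta=Q_{\mathrm d}/Q^\star$ be the resulting efficiency. Let $0<\hat\eta\le 1$ be a target efficiency. If $$N\ \ge\ \log_2\left(\frac{\pi}{\arccos\left(\sqrt{\hat\eta-\dfrac{(1-\hat\eta)\sum_{m=1}^M\beta_m}{\sum_{i,j=1,\,i\ne j}^M\sqrt{\beta_i\beta_j}}}\right)}\right),$$ then $\eta\ge\hat\eta$.
   Context: Setting: $M$ single-antenna energy transmitters ET$_1,\dots,$ET$_M$ send power to one energy receiver (ER). If ET$_m$ transmits with phase $\phi_m$ (each with power $P$), the harvested power at the ER is $Q(\phi_1,\dots,\phi_M)=P\big|\sum_{m}\sqrt{\beta_m}e^{\mathrm{i}(\phi_m-\theta_m)}\big|^2$, where idle transmitters contribute nothing; the phases $\theta_m$ are unknown to the transmitters. Protocol: ET$_1$ transmits with fixed phase $\bar\phi_1=0$. Then for $m=2,\dots,M$ in turn, with ET$_1,\dots,$ET$_{m-1}$ transmitting with fixed phases $\bar\phi_1,\dots,\bar\phi_{m-1}$ and the others idle, ET$_m$ runs algorithm (A1) below and thereafter transmits with the resulting phase $\bar\phi_m$. Here $Q_m(\phi)=P\big|\sqrt{\beta_m}e^{\mathrm{i}(\phi-\theta_m)}+\sum_{i=1}^{m-1}\sqrt{\beta_i}e^{\mathrm{i}(\bar\phi_i-\theta_i)}\big|^2$.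 Algorithm (A1) for ET$_m$: initialize $\mathcal A^{(1)}=[-\pi,\pi)$, $\psi=0$, $\psi'=-\pi$. For $n=1,\dots,N$: ET$_m$ transmits with phase $\psi$ and then $\psi'$; the ER feeds back one bit indicating whether $Q_m(\psi)>Q_m(\psi')$ (exact measurements). If $Q_m(\psi)>Q_m(\psi')$, set $\mathcal A^{(n+1)}=\mathcal A^{(n)}\setminus\{\theta\in[-\pi,\pi):\cos(\theta-\psi)<\cos(\theta-\psi')\}$, otherwise $\mathcal A^{(n+1)}=\mathcal A^{(n)}\setminus\{\theta\in[-\pi,\pi):\cos(\theta-\psi)>\cos(\theta-\psi')\}$; then set $\psi=\max_{\theta\in\mathcal A^{(n+1)}}\theta$, $\psi'=\min_{\theta\in\mathcal A^{(n+1)}}\theta$. Output $\bar\phi_m=(\psi+\psi')/2$. Finally $Q_{\mathrm d}=Q(\bar\phi_1,\dots,\bar\phi_M)$, $Q^\star=P\big(\sum_{m}\sqrt{\beta_m}\big)^2=P\big(\sum_m\beta_m+\sum_{i\ne j}\sqrt{\beta_i\beta_j}\big)$, and $\eta=Q_{\mathrm d}/Q^\star$. The right-hand side of the condition on $N$ is understood whenever it is well defined (the expression under the square root lies in $[0,1]$). *)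

theory Defs
  imports Complex_Main
begin

definition Qm :: "(nat \<Rightarrow> real) \<Rightarrow> (nat \<Rightarrow> real) \<Rightarrow> real \<Rightarrow> (nat \<Rightarrow> real) \<Rightarrow> nat \<Rightarrow> real \<Rightarrow> real" where
  "Qm beta theta P ph m phi =
     P * (cmod (complex_of_real (sqrt (beta m)) * cis (phi - theta m)
               + (\<Sum>i\<in>{1..<m}. complex_of_real (sqrt (beta i)) * cis (ph i - theta i)))) ^ 2"

text \<open>Endpoints (max, min) of a set of phases in [-pi,pi), read as a closed arc of the circle:
  the arc goes counterclockwise from the min psi' to the max psi.  When the set is an ordinary
  closed interval inside [-pi,pi) these are its literal max and min.\<close>
definition arc_ends :: "real set \<Rightarrow> real \<times> real" where
  "arc_ends A = (THE (b, a). -pi \<le> a \<and> a < pi \<and> a \<le> b \<and> b < a + 2 * pi \<and>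
      A = {t \<in> {-pi..<pi}. \<exists>k::int. a \<le> t + 2 * pi * of_int k \<and> t + 2 * pi * of_int k \<le> b})"

definition a1_step :: "(real \<Rightarrow> real) \<Rightarrow> real set \<times> real \<times> real \<Rightarrow> real set \<times> real \<times> real" where
  "a1_step f s = (case s of (A, psi, psi') \<Rightarrow>
     let A' = (if f psi > f psi'
               then A - {t \<in> {-pi..<pi}. cos (t - psi) < cos (t - psi')}
               else A - {t \<in> {-pi..<pi}. cos (t - psi) > cos (t - psi')})
     in (A', fst (arc_ends A'), snd (arc_ends A')))"

definition a1_output :: "nat \<Rightarrow> (real \<Rightarrow> real) \<Rightarrow> real" where
  "a1_output N f = (case (a1_step f ^^ N) ({-pi..<pi}, 0, -pi) of (A, psi, psi') \<Rightarrow> (psi + psi') / 2)"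

fun phases :: "(nat \<Rightarrow> real) \<Rightarrow> (nat \<Rightarrow> real) \<Rightarrow> real \<Rightarrow> nat \<Rightarrow> nat \<Rightarrow> (nat \<Rightarrow> real)" where
  "phases beta theta P N 0 = (\<lambda>_. 0)"
| "phases beta theta P N (Suc m) =
     (let ph = phases beta theta P N m in
      if m = 0 then ph(1 := 0)
      else ph(Suc m := a1_output N (Qm beta theta P ph (Suc m))))"

definition Qd :: "nat \<Rightarrow> (nat \<Rightarrow> real) \<Rightarrow> (nat \<Rightarrow> real) \<Rightarrow> real \<Rightarrow> nat \<Rightarrow> real" where
  "Qd M beta theta P N =
     P * (cmod (\<Sum>m\<in>{1..M}. complex_of_real (sqrt (beta m)) * cis (phases beta theta P N M m - theta m))) ^ 2"

definition Qstar :: "nat \<Rightarrow> (nat \<Rightarrow> real) \<Rightarrow> real \<Rightarrow> real" where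
  "Qstar M beta P = P * (\<Sum>m\<in>{1..M}. sqrt (beta m)) ^ 2"

definition eta :: "nat \<Rightarrow> (nat \<Rightarrow> real) \<Rightarrow> (nat \<Rightarrow> real) \<Rightarrow> real \<Rightarrow> nat \<Rightarrow> real" where
  "eta M beta theta P N = Qd M beta theta P N / Qstar M beta P"

end

theory Submission imports Defs begin

definition per :: "real \<Rightarrow> real \<Rightarrow> real \<Rightarrow> bool" where
  "per a b t = (\<exists>k::int. a \<le> t + 2*pi*of_int k \<and> t + 2*pi*of_int k \<le> b)"

definition arcset :: "real \<Rightarrow> real \<Rightarrow> real set" where
  "arcset a b = {t \<in> {-pi..<pi}. \<exists>k::int. a \<le> t + 2 * pi * of_int k \<and> t + 2 * pi * of_int k \<le> b}"

lemma arcset_per: "arcset a b = {t \<in> {-pi..<pi}. per a b t}"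
  by (simp add: arcset_def per_def)

lemma per_shift: "per a b (t + 2*pi*of_int j) = per a b t"
proof
  assume "per a b (t + 2*pi*of_int j)"
  then obtain k::int where "a \<le> t + 2*pi*of_int j + 2*pi*of_int k" "t + 2*pi*of_int j + 2*pi*of_int k \<le> b"
    by (auto simp: per_def)
  then show "per a b t" unfolding per_def
    by (intro exI[of _ "j+k"]) (simp add: algebra_simps)
next
  assume "per a b t"
  then obtain k::int where "a \<le> t + 2*pi*of_int k" "t + 2*pi*of_int k \<le> b"
    by (auto simp: per_def)
  then show "per a b (t + 2*pi*of_int j)" unfolding per_def
    by (intro exI[of _ "k-j"]) (simp add: algebra_simps)
qed

lemma rep_exists: "\<exists>j::int. -pi \<le> t + 2*pi*of_int j \<and> t + 2*pi*of_int j < pi"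
proof -
  define j where "j = - floor ((t + pi) / (2*pi))"
  have f1: "of_int (floor ((t + pi) / (2*pi))) \<le> (t + pi) / (2*pi)" by (rule of_int_floor_le)
  have f2: "(t + pi) / (2*pi) < of_int (floor ((t + pi) / (2*pi))) + 1" by (rule real_of_int_floor_add_one_gt)
  have p: "pi > 0" by (rule pi_gt_zero)
  have e: "2*pi*((t + pi) / (2*pi)) = t + pi" using p by simp
  from f1 p have "2*pi*of_int (floor ((t + pi) / (2*pi))) \<le> 2*pi*((t + pi) / (2*pi))"
    by (intro mult_left_mono) auto
  moreover from f2 p have "2*pi*((t + pi) / (2*pi)) < 2*pi*(of_int (floor ((t + pi) / (2*pi))) + 1)"
    by (intro mult_strict_left_mono) auto
  ultimately have "2*pi*of_int (floor ((t + pi) / (2*pi))) \<le> t + pi"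
     "t + pi < 2*pi*(of_int (floor ((t + pi) / (2*pi))) + 1)" using e by auto
  then show ?thesis
    by (intro exI[of _ j]) (simp add: j_def algebra_simps)
qed

lemma arcset_eq_per:
  assumes "arcset a b = arcset a' b'"
  shows "per a b t = per a' b' t"
proof -
  obtain j::int where j: "-pi \<le> t + 2*pi*of_int j" "t + 2*pi*of_int j < pi"
    using rep_exists by blast
  let ?s = "t + 2*pi*of_int j"
  have "?s \<in> arcset a b \<longleftrightarrow> ?s \<in> arcset a' b'" using assms by simp
  then have "per a b ?s = per a' b' ?s" using j by (simp add: arcset_per)
  then show ?thesis by (simp add: per_shift)
qed

lemma int_small: "\<bar>2*pi*of_int (k::int)\<bar> < 2*pi \<Longrightarrow> k = 0"
proof -
  assume h: "\<bar>2*pi*of_int k\<bar> < 2*pi"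
  have "\<bar>2*pi*of_int k\<bar> = 2*pi*\<bar>of_int k\<bar>" by (simp add: abs_mult)
  with h have "\<bar>of_int k :: real\<bar> < 1" by simp
  then show "k = 0" by linarith
qed

lemma start_eq:
  assumes n: "-pi \<le> a" "a < pi" "a \<le> b" "b < a + 2*pi" "-pi \<le> a'" "a' < pi" "a' \<le> b'" "b' < a' + 2*pi"
    and e: "\<And>t. per a b t = per a' b' t"
  shows "a = a'"
proof -
  have "per a b a" unfolding per_def using n by (intro exI[of _ 0]) simp
  then have "per a' b' a" using e by simp
  then obtain k::int where k: "a' \<le> a + 2*pi*of_int k" "a + 2*pi*of_int k \<le> b'" by (auto simp: per_def)
  have eq: "a + 2*pi*of_int k = a'"
  proof (rule ccontr)
    assume ne: "a + 2*pi*of_int k \<noteq> a'"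
    define s where "s = a + 2*pi*of_int k"
    define d where "d = min (s - a') (2*pi - (b - a)) / 2"
    have sgt: "s > a'" using ne k by (simp add: s_def)
    have dpos: "d > 0" using sgt n by (simp add: d_def)
    have d1: "d < s - a'" "d < 2*pi - (b-a)" using sgt n dpos by (auto simp: d_def)
    have "per a' b' (s - d)" unfolding per_def using d1 k dpos by (intro exI[of _ 0]) (simp add: s_def)
    then have "per a b (s - d)" using e by simp
    then obtain j::int where j: "a \<le> s - d + 2*pi*of_int j" "s - d + 2*pi*of_int j \<le> b" by (auto simp: per_def)
    have j1: "0 \<le> 2*pi*of_int (k + j) - d" "2*pi*of_int (k+j) - d \<le> b - a"
      using j by (simp_all add: s_def algebra_simps)
    have "2*pi*of_int (k+j) > 0" using j1 dpos by linarith
    then have "of_int (k+j) > (0::real)" by (simp add: zero_less_mult_iff)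
    then have "k + j \<ge> 1" by linarith
    then have "of_int (k+j) \<ge> (1::real)" by linarith
    then have "2*pi*of_int (k+j) \<ge> 2*pi" by simp
    with j1 d1 show False by linarith
  qed
  have "\<bar>2*pi*of_int k\<bar> < 2*pi" using eq n by linarith
  then have "k = 0" by (rule int_small)
  with eq show ?thesis by simp
qed

lemma end_le:
  assumes n: "a \<le> b" "b < a + 2*pi" "b' < a + 2*pi"
    and e: "\<And>t. per a b t = per a b' t"
  shows "b \<le> b'"
proof -
  have "per a b b" unfolding per_def using n by (intro exI[of _ 0]) simp
  then have "per a b' b" using e by simp
  then obtain k::int where k: "a \<le> b + 2*pi*of_int k" "b + 2*pi*of_int k \<le> b'" by (auto simp: per_def)
  have "\<bar>2*pi*of_int k\<bar> < 2*pi" using k n by linarith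
  then have "k = 0" by (rule int_small)
  with k show ?thesis by simp
qed

lemma arc_ends_eq:
  assumes n: "-pi \<le> a" "a < pi" "a \<le> b" "b < a + 2*pi"
  shows "arc_ends (arcset a b) = (b, a)"
  unfolding arc_ends_def
proof (rule the_equality)
  show "case (b, a) of (b', a') \<Rightarrow> -pi \<le> a' \<and> a' < pi \<and> a' \<le> b' \<and> b' < a' + 2 * pi \<and>
      arcset a b = {t \<in> {-pi..<pi}. \<exists>k::int. a' \<le> t + 2 * pi * of_int k \<and> t + 2 * pi * of_int k \<le> b'}"
    using n by (simp add: arcset_def)
next
  fix p assume h: "case p of (b', a') \<Rightarrow> -pi \<le> a' \<and> a' < pi \<and> a' \<le> b' \<and> b' < a' + 2 * pi \<and>
      arcset a b = {t \<in> {-pi..<pi}. \<exists>k::int. a' \<le> t + 2 * pi * of_int k \<and> t + 2 * pi * of_int k \<le> b'}"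
  obtain b' a' where p: "p = (b', a')" by (cases p)
  with h have h': "-pi \<le> a'" "a' < pi" "a' \<le> b'" "b' < a' + 2 * pi" "arcset a b = arcset a' b'"
    by (auto simp: arcset_def)
  have e: "\<And>t. per a b t = per a' b' t" using h'(5) by (rule arcset_eq_per)
  have "a = a'" using start_eq[OF n h'(1-4) e] .
  with e have e2: "\<And>t. per a b t = per a b' t" by simp
  have "b \<le> b'" using end_le[of a b b'] n h' \<open>a = a'\<close> e2 by simp
  moreover have "b' \<le> b" using end_le[of a b' b] n h' \<open>a = a'\<close> e2 by simp
  ultimately show "p = (b, a)" using p \<open>a = a'\<close> by simp
qed


lemma cos_shift_int: "cos (x + 2*pi*of_int k) = cos x"
  by (simp add: cos_add)
lemma sin_shift_int: "sin (x + 2*pi*of_int k) = sin x"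
  by (auto simp: sin_add)
lemma cos_shift_int': "cos (x - 2*pi*of_int k) = cos x"
  by (simp add: cos_diff)
lemma sin_shift_int': "sin (x - 2*pi*of_int k) = sin x"
  by (simp add: sin_diff)

lemma cos_diff_id: "cos ((t::real) - (a + L)) - cos (t - a) = 2 * sin (t - (a + L/2)) * sin (L/2)"
proof -
  have h: "cos (u - v) - cos (u + v) = 2 * sin u * sin v" for u v :: real by (simp add: cos_diff cos_add)
  have e1: "(t - (a + L/2)) - L/2 = t - (a+L)" by simp
  have e2: "(t - (a + L/2)) + L/2 = t - a" by simp
  show ?thesis using h[of "t - (a + L/2)" "L/2"] unfolding e1 e2 .
qed

lemma sin_neg_lt: "-pi < x \<Longrightarrow> x < 0 \<Longrightarrow> sin x < 0"
  using sin_gt_zero[of "-x"] by simp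

lemma keep1:
  assumes "a \<le> s" "s \<le> a + L" "0 < L" "L \<le> pi"
  shows "cos (s - (a + L)) < cos (s - a) \<longleftrightarrow> s < a + L/2"
proof -
  have sL: "sin (L/2) > 0" using assms by (intro sin_gt_zero) auto
  have "cos (s - (a + L)) < cos (s - a) \<longleftrightarrow> 2 * sin (s - (a + L/2)) * sin (L/2) < 0"
    using cos_diff_id[of s a L] by linarith
  also have "\<dots> \<longleftrightarrow> sin (s - (a + L/2)) < 0" using sL by (simp add: mult_less_0_iff)
  also have "\<dots> \<longleftrightarrow> s < a + L/2"
  proof
    assume h: "sin (s - (a + L/2)) < 0"
    show "s < a + L/2"
    proof (rule ccontr)
      assume "\<not> s < a + L/2"
      then have "0 \<le> sin (s - (a + L/2))" using assms by (intro sin_ge_zero) auto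
      with h show False by simp
    qed
  next
    assume "s < a + L/2"
    then show "sin (s - (a + L/2)) < 0" using assms by (intro sin_neg_lt) auto
  qed
  finally show ?thesis .
qed

lemma keep2:
  assumes "a \<le> s" "s \<le> a + L" "0 < L" "L \<le> pi"
  shows "cos (s - (a + L)) > cos (s - a) \<longleftrightarrow> s > a + L/2"
proof -
  have sL: "sin (L/2) > 0" using assms by (intro sin_gt_zero) auto
  have "cos (s - (a + L)) > cos (s - a) \<longleftrightarrow> 2 * sin (s - (a + L/2)) * sin (L/2) > 0"
    using cos_diff_id[of s a L] by linarith
  also have "\<dots> \<longleftrightarrow> sin (s - (a + L/2)) > 0" using sL by (simp add: zero_less_mult_iff)
  also have "\<dots> \<longleftrightarrow> s > a + L/2"
  proof
    assume h: "sin (s - (a + L/2)) > 0"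
    show "s > a + L/2"
    proof (rule ccontr)
      assume "\<not> s > a + L/2"
      then have "sin (s - (a + L/2)) \<le> 0" 
        using assms sin_neg_lt[of "s - (a + L/2)"] by (cases "s = a + L/2") auto
      with h show False by simp
    qed
  next
    assume "s > a + L/2"
    then show "sin (s - (a + L/2)) > 0" using assms by (intro sin_gt_zero) auto
  qed
  finally show ?thesis .
qed

lemma per_shift2: "per (a + 2*pi*of_int j) (b + 2*pi*of_int j) t = per a b t"
proof -
  have "per (a + 2*pi*of_int j) (b + 2*pi*of_int j) t = per a b (t - 2*pi*of_int j)"
    unfolding per_def by (simp add: algebra_simps)
  also have "\<dots> = per a b (t - 2*pi*of_int j + 2*pi*of_int j)" by (rule per_shift[symmetric])
  finally show ?thesis by simp
qed

lemma per_add: "per a b (t + d) = per (a - d) (b - d) t"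
  unfolding per_def by (simp add: algebra_simps)

definition nrm :: "real \<Rightarrow> real" where "nrm x = (if x < pi then x else x - 2*pi)"

lemma per_nrm: "per (nrm c) (nrm c + L) t = per c (c + L) t"
proof (cases "c < pi")
  case False
  have "per (c + 2*pi*of_int (-1)) (c + L + 2*pi*of_int (-1)) t = per c (c + L) t" by (rule per_shift2)
  then show ?thesis using False by (simp add: nrm_def algebra_simps)
qed (simp add: nrm_def)

lemma E1:
  assumes "0 < L" "L \<le> pi"
  shows "arcset a (a + L) - {t \<in> {-pi..<pi}. cos (t - (a + L)) < cos (t - a)} = arcset (a + L/2) (a + L/2 + L/2)"
proof -
  have "per a (a + L) t \<and> \<not> cos (t - (a + L)) < cos (t - a) \<longleftrightarrow> per (a + L/2) (a + L/2 + L/2) t" for t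
  proof
    assume h: "per a (a + L) t \<and> \<not> cos (t - (a + L)) < cos (t - a)"
    then obtain k::int where k: "a \<le> t + 2*pi*of_int k" "t + 2*pi*of_int k \<le> a + L" by (auto simp: per_def)
    let ?s = "t + 2*pi*of_int k"
    have "cos (?s - (a + L)) = cos (t - (a + L))" "cos (?s - a) = cos (t - a)"
      using cos_shift_int[of "t - (a+L)" k] cos_shift_int[of "t - a" k] by (simp_all add: algebra_simps)
    with h keep1[OF k assms] have "\<not> ?s < a + L/2" by simp
    with k show "per (a + L/2) (a + L/2 + L/2) t" unfolding per_def by (intro exI[of _ k]) simp
  next
    assume "per (a + L/2) (a + L/2 + L/2) t"
    then obtain k::int where k: "a + L/2 \<le> t + 2*pi*of_int k" "t + 2*pi*of_int k \<le> a + L" by (auto simp: per_def)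
    let ?s = "t + 2*pi*of_int k"
    have k': "a \<le> ?s" using k assms by simp
    have "cos (?s - (a + L)) = cos (t - (a + L))" "cos (?s - a) = cos (t - a)"
      using cos_shift_int[of "t - (a+L)" k] cos_shift_int[of "t - a" k] by (simp_all add: algebra_simps)
    with k keep1[OF k' k(2) assms] have "\<not> cos (t - (a + L)) < cos (t - a)" by simp
    moreover have "per a (a + L) t" unfolding per_def using k k' by (intro exI[of _ k]) simp
    ultimately show "per a (a + L) t \<and> \<not> cos (t - (a + L)) < cos (t - a)" by simp
  qed
  then show ?thesis by (auto simp: arcset_per)
qed

lemma E2:
  assumes "0 < L" "L \<le> pi"
  shows "arcset a (a + L) - {t \<in> {-pi..<pi}. cos (t - (a + L)) > cos (t - a)} = arcset a (a + L/2)"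
proof -
  have "per a (a + L) t \<and> \<not> cos (t - (a + L)) > cos (t - a) \<longleftrightarrow> per a (a + L/2) t" for t
  proof
    assume h: "per a (a + L) t \<and> \<not> cos (t - (a + L)) > cos (t - a)"
    then obtain k::int where k: "a \<le> t + 2*pi*of_int k" "t + 2*pi*of_int k \<le> a + L" by (auto simp: per_def)
    let ?s = "t + 2*pi*of_int k"
    have "cos (?s - (a + L)) = cos (t - (a + L))" "cos (?s - a) = cos (t - a)"
      using cos_shift_int[of "t - (a+L)" k] cos_shift_int[of "t - a" k] by (simp_all add: algebra_simps)
    with h keep2[OF k assms] have "\<not> ?s > a + L/2" by simp
    with k show "per a (a + L/2) t" unfolding per_def by (intro exI[of _ k]) simp
  next
    assume "per a (a + L/2) t"
    then obtain k::int where k: "a \<le> t + 2*pi*of_int k" "t + 2*pi*of_int k \<le> a + L/2" by (auto simp: per_def)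
    let ?s = "t + 2*pi*of_int k"
    have k': "?s \<le> a + L" using k assms by simp
    have "cos (?s - (a + L)) = cos (t - (a + L))" "cos (?s - a) = cos (t - a)"
      using cos_shift_int[of "t - (a+L)" k] cos_shift_int[of "t - a" k] by (simp_all add: algebra_simps)
    with k keep2[OF k(1) k' assms] have "\<not> cos (t - (a + L)) > cos (t - a)" by simp
    moreover have "per a (a + L) t" unfolding per_def using k k' by (intro exI[of _ k]) simp
    ultimately show "per a (a + L) t \<and> \<not> cos (t - (a + L)) > cos (t - a)" by simp
  qed
  then show ?thesis by (auto simp: arcset_per)
qed

lemma arcset_nrm: "arcset (nrm c) (nrm c + L) = arcset c (c + L)"
  by (simp add: arcset_per per_nrm)

lemma step_generic:
  assumes "-pi \<le> a" "a < pi" "0 < L" "L \<le> pi"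
  shows "a1_step f (arcset a (a + L), a + L, a) =
     (if f (a + L) > f a then (arcset (nrm (a + L/2)) (nrm (a + L/2) + L/2), nrm (a + L/2) + L/2, nrm (a + L/2))
      else (arcset a (a + L/2), a + L/2, a))"
proof -
  have n1: "-pi \<le> nrm (a + L/2)" "nrm (a + L/2) < pi" using assms by (auto simp: nrm_def)
  have ae1: "arc_ends (arcset (nrm (a + L/2)) (nrm (a + L/2) + L/2)) = (nrm (a + L/2) + L/2, nrm (a + L/2))"
    using n1 assms by (intro arc_ends_eq) auto
  have ae2: "arc_ends (arcset a (a + L/2)) = (a + L/2, a)"
    using assms by (intro arc_ends_eq) auto
  show ?thesis
    unfolding a1_step_def Let_def using E1[OF assms(3,4), of a] E2[OF assms(3,4), of a] ae1 ae2
    by (simp add: arcset_nrm)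
qed

lemma sin_nonneg_per: "0 \<le> sin x \<longleftrightarrow> per 0 pi x"
proof
  assume "per 0 pi x"
  then obtain k::int where k: "0 \<le> x + 2*pi*of_int k" "x + 2*pi*of_int k \<le> pi" by (auto simp: per_def)
  then have "0 \<le> sin (x + 2*pi*of_int k)" by (intro sin_ge_zero)
  then show "0 \<le> sin x" by (simp add: sin_shift_int)
next
  assume h: "0 \<le> sin x"
  obtain j::int where j: "-pi \<le> x + 2*pi*of_int j" "x + 2*pi*of_int j < pi" using rep_exists by blast
  have sj: "sin (x + 2*pi*of_int j) \<ge> 0" using h by (simp add: sin_shift_int)
  show "per 0 pi x"
  proof (cases "x + 2*pi*of_int j \<ge> 0")
    case True then show ?thesis using j unfolding per_def by (intro exI[of _ j]) simp
  next
    case False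
    show ?thesis
    proof (cases "x + 2*pi*of_int j = -pi")
      case True
      have "x + 2*pi*of_int (j+1) = pi" using True by (simp add: algebra_simps)
      then show ?thesis unfolding per_def by (intro exI[of _ "j+1"]) simp
    next
      case False2: False
      then have "sin (x + 2*pi*of_int j) < 0" using j False by (intro sin_neg_lt) auto
      with sj show ?thesis by simp
    qed
  qed
qed

lemma F1: "{-pi..<pi} - {t \<in> {-pi..<pi}. cos (t - 0) < cos (t - - pi)} = arcset (-(pi/2)) (-(pi/2) + pi)" (is "?A = ?B")
proof -
  have H: "\<not> cos (t - 0) < cos (t - - pi) \<longleftrightarrow> per (-(pi/2)) (-(pi/2) + pi) t" for t
  proof -
    have e: "(0 - pi/2) = -(pi/2)" "pi - pi/2 = -(pi/2) + pi" by simp_all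
    have c1: "cos (t - - pi) = - cos t" by simp
    have c2: "sin (t + pi/2) = cos t" by (simp add: sin_add)
    have "\<not> cos (t - 0) < cos (t - - pi) \<longleftrightarrow> 0 \<le> sin (t + pi/2)" unfolding c1 c2 by auto
    also have "\<dots> \<longleftrightarrow> per 0 pi (t + pi/2)" by (rule sin_nonneg_per)
    also have "\<dots> \<longleftrightarrow> per (0 - pi/2) (pi - pi/2) t" by (rule per_add)
    also have "per (0 - pi/2) (pi - pi/2) t \<longleftrightarrow> per (-(pi/2)) (-(pi/2) + pi) t" by (simp only: e)
    finally show ?thesis .
  qed
  show ?thesis
  proof (rule set_eqI)
    fix t show "t \<in> ?A \<longleftrightarrow> t \<in> ?B" unfolding arcset_per using H[of t] by blast
  qed
qed

lemma F2: "{-pi..<pi} - {t \<in> {-pi..<pi}. cos (t - 0) > cos (t - - pi)} = arcset (pi/2) (pi/2 + pi)" (is "?A = ?B")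
proof -
  have H: "\<not> cos (t - 0) > cos (t - - pi) \<longleftrightarrow> per (pi/2) (pi/2 + pi) t" for t
  proof -
    have e: "(0 - - (pi/2)) = pi/2" "pi - - (pi/2) = pi/2 + pi" by simp_all
    have c1: "cos (t - - pi) = - cos t" by simp
    have c2: "sin (t + - (pi/2)) = - cos t" by (simp add: sin_add sin_diff)
    have "\<not> cos (t - 0) > cos (t - - pi) \<longleftrightarrow> 0 \<le> sin (t + - (pi/2))" unfolding c1 c2 by auto
    also have "\<dots> \<longleftrightarrow> per 0 pi (t + - (pi/2))" by (rule sin_nonneg_per)
    also have "\<dots> \<longleftrightarrow> per (0 - - (pi/2)) (pi - - (pi/2)) t" by (rule per_add)
    also have "per (0 - - (pi/2)) (pi - - (pi/2)) t \<longleftrightarrow> per (pi/2) (pi/2 + pi) t" by (simp only: e)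
    finally show ?thesis .
  qed
  show ?thesis
  proof (rule set_eqI)
    fix t show "t \<in> ?A \<longleftrightarrow> t \<in> ?B" unfolding arcset_per using H[of t] by blast
  qed
qed

lemma cos_rep: "cos (p + 2*pi*of_int k - x) = cos (x - p)"
proof -
  have "cos (p + 2*pi*of_int k - x) = cos ((p - x) + 2*pi*of_int k)" by (simp add: algebra_simps)
  also have "\<dots> = cos (p - x)" by (rule cos_shift_int)
  also have "\<dots> = cos (x - p)" by (metis cos_minus minus_diff_eq)
  finally show ?thesis .
qed

definition Hf :: "(real \<Rightarrow> real) \<Rightarrow> real \<Rightarrow> bool" where
  "Hf f p = (\<forall>x y. f x > f y \<longleftrightarrow> cos (x - p) > cos (y - p))"

lemma inv:
  "\<exists>a. -pi \<le> a \<and> a < pi \<and> (a1_step f ^^ Suc n) ({-pi..<pi}, 0, -pi) = (arcset a (a + pi/2^n), a + pi/2^n, a)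
      \<and> (Hf f p \<longrightarrow> per a (a + pi/2^n) p)"
proof (induction n)
  case 0
  have pp: "pi > 0" by (rule pi_gt_zero)
  show ?case
  proof (cases "f 0 > f (-pi)")
    case True
    have ae: "arc_ends (arcset (-(pi/2)) (-(pi/2) + pi)) = (-(pi/2) + pi, -(pi/2))"
      using pp by (intro arc_ends_eq; linarith)
    have st: "(a1_step f ^^ Suc 0) ({-pi..<pi}, 0, -pi) = (arcset (-(pi/2)) (-(pi/2) + pi), -(pi/2) + pi, -(pi/2))"
      using True F1 ae unfolding a1_step_def Let_def by simp
    have "per (-(pi/2)) (-(pi/2) + pi) p" if H: "Hf f p"
    proof -
      have "cos (0 - p) > cos (-pi - p)" using H True unfolding Hf_def by blast
      then have "cos p > 0" by (simp add: cos_diff)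
      then have "0 \<le> sin (p + pi/2)" by (simp add: sin_add)
      then have "per 0 pi (p + pi/2)" by (simp add: sin_nonneg_per)
      then show ?thesis by (simp add: per_add)
    qed
    moreover have "-(pi/2) < pi" "-pi \<le> -(pi/2)" using pp by linarith+
    ultimately show ?thesis using st by (intro exI[of _ "-(pi/2)"]) auto
  next
    case False
    have ae: "arc_ends (arcset (pi/2) (pi/2 + pi)) = (pi/2 + pi, pi/2)"
      using pp by (intro arc_ends_eq; linarith)
    have st: "(a1_step f ^^ Suc 0) ({-pi..<pi}, 0, -pi) = (arcset (pi/2) (pi/2 + pi), pi/2 + pi, pi/2)"
      using False F2 ae unfolding a1_step_def Let_def by simp
    have "per (pi/2) (pi/2 + pi) p" if H: "Hf f p"
    proof -
      have "\<not> cos (0 - p) > cos (-pi - p)" using H False unfolding Hf_def by blast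
      then have "cos p \<le> 0" by (simp add: cos_diff)
      then have "0 \<le> sin (p - pi/2)" by (simp add: sin_diff)
      then have "per 0 pi (p - pi/2)" by (simp add: sin_nonneg_per)
      then show ?thesis using per_add[of 0 pi p "- (pi/2)"] by simp
    qed
    moreover have "pi/2 < pi" "-pi \<le> pi/2" using pp by linarith+
    ultimately show ?thesis using st by (intro exI[of _ "pi/2"]) auto
  qed
next
  case (Suc n)
  define L where "L = pi / 2^n"
  from Suc.IH obtain a where a: "-pi \<le> a" "a < pi"
    "(a1_step f ^^ Suc n) ({-pi..<pi}, 0, -pi) = (arcset a (a + L), a + L, a)"
    "Hf f p \<longrightarrow> per a (a + L) p" unfolding L_def by blast
  have L: "0 < L" "L \<le> pi" unfolding L_def by (auto simp: divide_le_eq)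
  have L2: "pi / 2 ^ Suc n = L/2" unfolding L_def by simp
  have it: "(a1_step f ^^ Suc (Suc n)) ({-pi..<pi}, 0, -pi) = a1_step f (arcset a (a + L), a + L, a)"
    using a(3) by simp
  show ?case
  proof (cases "f (a + L) > f a")
    case True
    define c where "c = nrm (a + L/2)"
    have c: "-pi \<le> c" "c < pi" using a L by (auto simp: nrm_def c_def)
    have st: "(a1_step f ^^ Suc (Suc n)) ({-pi..<pi}, 0, -pi) = (arcset c (c + L/2), c + L/2, c)"
      using it step_generic[OF a(1,2) L, of f] True by (simp add: c_def)
    have "per c (c + L/2) p" if H: "Hf f p"
    proof -
      obtain k::int where k: "a \<le> p + 2*pi*of_int k" "p + 2*pi*of_int k \<le> a + L"
        using a(4) H by (auto simp: per_def)
      have "cos (a + L - p) > cos (a - p)" using H True unfolding Hf_def by blast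
      then have "\<not> cos (p + 2*pi*of_int k - (a + L)) < cos (p + 2*pi*of_int k - a)"
        by (simp add: cos_rep)
      then have "\<not> p + 2*pi*of_int k < a + L/2" using keep1[OF k L] by simp
      then have "per (a + L/2) (a + L/2 + L/2) p" unfolding per_def using k by (intro exI[of _ k]) simp
      then show ?thesis by (simp add: c_def per_nrm)
    qed
    then show ?thesis unfolding L2 using st c by blast
  next
    case False
    have st: "(a1_step f ^^ Suc (Suc n)) ({-pi..<pi}, 0, -pi) = (arcset a (a + L/2), a + L/2, a)"
      using it step_generic[OF a(1,2) L, of f] False by simp
    have "per a (a + L/2) p" if H: "Hf f p"
    proof -
      obtain k::int where k: "a \<le> p + 2*pi*of_int k" "p + 2*pi*of_int k \<le> a + L"
        using a(4) H by (auto simp: per_def)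
      have "\<not> cos (a + L - p) > cos (a - p)" using H False unfolding Hf_def by blast
      then have "\<not> cos (p + 2*pi*of_int k - (a + L)) > cos (p + 2*pi*of_int k - a)"
        by (simp add: cos_rep)
      then have "\<not> p + 2*pi*of_int k > a + L/2" using keep2[OF k L] by simp
      then show "per a (a + L/2) p" unfolding per_def using k by (intro exI[of _ k]) simp
    qed
    then show ?thesis unfolding L2 using st a(1,2) by blast
  qed
qed

lemma output_bound:
  assumes "N \<ge> 1" "Hf f p"
  shows "cos (a1_output N f - p) \<ge> cos (pi / 2^N)"
proof -
  obtain n where N: "N = Suc n" using assms(1) by (cases N) auto
  define L where "L = pi / 2^n"
  obtain a where a: "(a1_step f ^^ Suc n) ({-pi..<pi}, 0, -pi) = (arcset a (a + L), a + L, a)"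
    "per a (a + L) p" using inv[where f=f and n=n and p=p] assms(2) unfolding L_def by blast
  have L: "0 < L" "L \<le> pi" unfolding L_def by (auto simp: divide_le_eq)
  have o: "a1_output N f = a + L/2" using a(1) N unfolding a1_output_def by simp
  obtain k::int where k: "a \<le> p + 2*pi*of_int k" "p + 2*pi*of_int k \<le> a + L"
    using a(2) by (auto simp: per_def)
  have "cos (a1_output N f - p) = cos (p + 2*pi*of_int k - (a + L/2))" using o by (simp add: cos_rep)
  also have "\<dots> = cos \<bar>p + 2*pi*of_int k - (a + L/2)\<bar>" by simp
  finally have e: "cos (a1_output N f - p) = cos \<bar>p + 2*pi*of_int k - (a + L/2)\<bar>" .
  have m: "cos (L/2) \<le> cos \<bar>p + 2*pi*of_int k - (a + L/2)\<bar>"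
    using k L by (intro cos_monotone_0_pi_le) (auto simp: abs_if)
  have h: "pi / 2^N = L/2" unfolding L_def N by simp
  show ?thesis unfolding h e by (rule m)
qed


lemma cmod_expand:
  fixes z :: complex and bt :: real
  assumes "bt \<ge> 0"
  shows "(cmod (complex_of_real (sqrt bt) * cis u + z))^2 = bt + (cmod z)^2 + 2 * sqrt bt * cmod z * cos (u - Arg z)"
proof -
  define r where "r = cmod z"
  define al where "al = Arg z"
  have z: "z = complex_of_real r * cis al" using rcis_cmod_Arg[of z] by (simp add: rcis_def r_def al_def)
  have "(cmod (complex_of_real (sqrt bt) * cis u + z))^2 =
        (sqrt bt * cos u + r * cos al)^2 + (sqrt bt * sin u + r * sin al)^2"
    by (simp add: cmod_power2 z)
  also have "\<dots> = (sqrt bt)^2 * ((cos u)^2 + (sin u)^2) + r^2 * ((cos al)^2 + (sin al)^2)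
      + 2 * sqrt bt * r * (cos u * cos al + sin u * sin al)"
    by algebra
  also have "\<dots> = bt + r^2 + 2 * sqrt bt * r * cos (u - al)"
  proof -
    have s1: "(cos u)^2 + (sin u)^2 = 1" "(cos al)^2 + (sin al)^2 = 1" by simp_all
    have s2: "(sqrt bt)^2 = bt" using assms by simp
    have s3: "cos (u - al) = cos u * cos al + sin u * sin al" by (simp add: cos_diff)
    show ?thesis by (simp only: s1 s2 s3 mult_1_right)
  qed
  finally show ?thesis by (simp add: r_def al_def)
qed

lemma Hf_form:
  fixes z :: complex
  assumes "bt > 0" "P > 0" "z \<noteq> 0"
  shows "Hf (\<lambda>phi. P * (cmod (complex_of_real (sqrt bt) * cis (phi - th) + z))^2) (th + Arg z)"
proof -
  have k: "2 * sqrt bt * cmod z > 0" using assms by simp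
  have e: "P * (cmod (complex_of_real (sqrt bt) * cis (x - th) + z))^2
      = P * (bt + (cmod z)^2) + (P * (2 * sqrt bt * cmod z)) * cos (x - (th + Arg z))" for x
  proof -
    have ce: "(cmod (complex_of_real (sqrt bt) * cis (x - th) + z))^2 = bt + (cmod z)^2 + 2 * sqrt bt * cmod z * cos (x - th - Arg z)"
      using assms cmod_expand[of bt "x - th" z] by simp
    have aa: "x - th - Arg z = x - (th + Arg z)" by simp
    show ?thesis unfolding ce aa by (simp only: algebra_simps)
  qed
  have kk: "P * (2 * sqrt bt * cmod z) > 0" using k assms by simp
  show ?thesis unfolding Hf_def e using kk by (auto simp: mult_less_cancel_left_pos)
qed

lemma phases_stable:
  "i \<le> m \<Longrightarrow> m \<le> m' \<Longrightarrow> phases beta theta P N m' i = phases beta theta P N m i"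
proof (induction m')
  case 0 then show ?case by simp
next
  case (Suc m')
  show ?case
  proof (cases "m = Suc m'")
    case True then show ?thesis by simp
  next
    case False
    then have "m \<le> m'" using Suc.prems by simp
    then have "i \<noteq> Suc m'" "m' = 0 \<longrightarrow> i \<noteq> 1" using Suc.prems by auto
    then have "phases beta theta P N (Suc m') i = phases beta theta P N m' i" by (simp add: Let_def)
    with Suc.IH[OF Suc.prems(1) \<open>m \<le> m'\<close>] show ?thesis by simp
  qed
qed

lemma phases_new:
  "m \<ge> 1 \<Longrightarrow> phases beta theta P N (Suc m) (Suc m) = a1_output N (Qm beta theta P (phases beta theta P N m) (Suc m))"
  by (simp add: Let_def)


lemma main_bound:
  fixes M N :: nat and beta theta :: "nat \<Rightarrow> real" and P c :: real
  assumes bpos: "\<forall>m\<in>{1..M}. beta m > 0" and P: "P > 0" and N: "N \<ge> 1"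
    and c: "c = cos (pi / 2^N)"
  defines "ph \<equiv> phases beta theta P N M"
  defines "S \<equiv> \<lambda>m. \<Sum>i\<in>{1..m}. complex_of_real (sqrt (beta i)) * cis (ph i - theta i)"
  defines "T \<equiv> \<lambda>m. \<Sum>i\<in>{1..m}. beta i"
  defines "B \<equiv> \<lambda>m. \<Sum>i\<in>{1..m}. sqrt (beta i)"
  shows "1 \<le> m \<Longrightarrow> m \<le> M \<Longrightarrow> (cmod (S m))^2 \<ge> T m + c^2 * ((B m)^2 - T m)"
proof (induction m)
  case 0 then show ?case by simp
next
  case (Suc m)
  have c0: "0 \<le> c" unfolding c
  proof (rule cos_ge_zero)
    have "(2::real)^N \<ge> 2" using N by (metis power_increasing power_one_right numeral_le_iff num.size(1) le_numeral_extra(1) one_le_numeral)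
    then have "pi / 2^N \<le> pi / 2" by (intro divide_left_mono) auto
    then show "pi / 2^N \<le> pi/2" .
    show "- (pi / 2) \<le> pi / 2 ^ N" using pi_gt_zero by (smt (verit) divide_nonneg_pos zero_less_power)
  qed
  have c1: "c \<le> 1" unfolding c by simp
  show ?case
  proof (cases "m = 0")
    case True
    have "S (Suc m) = complex_of_real (sqrt (beta 1)) * cis (ph 1 - theta 1)" using True by (simp add: S_def)
    moreover have b1: "beta 1 > 0" using bpos Suc.prems True by auto
    ultimately have "(cmod (S (Suc m)))^2 = beta 1" by (simp add: norm_mult)
    moreover have "T (Suc m) = beta 1" "B (Suc m) = sqrt (beta 1)" using True by (simp_all add: T_def B_def)
    moreover note b1
    ultimately show ?thesis by simp
  next
    case False
    then have m1: "1 \<le> m" by simp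
    have mM: "m \<le> M" using Suc.prems by simp
    have IH: "(cmod (S m))^2 \<ge> T m + c^2 * ((B m)^2 - T m)" using Suc.IH[OF m1 mM] .
    have bt: "beta (Suc m) > 0" using bpos Suc.prems by simp
    define z where "z = S m"
    define f where "f = Qm beta theta P (phases beta theta P N m) (Suc m)"
    have fe: "f = (\<lambda>phi. P * (cmod (complex_of_real (sqrt (beta (Suc m))) * cis (phi - theta (Suc m)) + z))^2)"
    proof
      fix phi
      have "(\<Sum>i\<in>{1..<Suc m}. complex_of_real (sqrt (beta i)) * cis (phases beta theta P N m i - theta i)) = z"
        unfolding z_def S_def ph_def
        by (rule sum.cong) (auto simp: phases_stable[of _ m M, OF _ mM])
      then show "f phi = P * (cmod (complex_of_real (sqrt (beta (Suc m))) * cis (phi - theta (Suc m)) + z))^2"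
        by (simp add: f_def Qm_def)
    qed
    have phS: "ph (Suc m) = a1_output N f"
      unfolding ph_def f_def using phases_stable[of "Suc m" "Suc m" M] Suc.prems phases_new[OF m1] by simp
    have SS: "S (Suc m) = z + complex_of_real (sqrt (beta (Suc m))) * cis (ph (Suc m) - theta (Suc m))"
      unfolding S_def z_def by simp
    define r where "r = cmod z"
    have r0: "r \<ge> 0" by (simp add: r_def)
    have expand: "(cmod (S (Suc m)))^2 = beta (Suc m) + r^2 + 2 * sqrt (beta (Suc m)) * r * cos (ph (Suc m) - theta (Suc m) - Arg z)"
      unfolding SS r_def using cmod_expand[of "beta (Suc m)" "ph (Suc m) - theta (Suc m)" z] bt by (simp add: add.commute)
    have crr: "r * cos (ph (Suc m) - theta (Suc m) - Arg z) \<ge> r * c"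
    proof (cases "z = 0")
      case True then show ?thesis by (simp add: r_def)
    next
      case False
      have "Hf f (theta (Suc m) + Arg z)" unfolding fe using Hf_form[OF bt P False] .
      then have "cos (a1_output N f - (theta (Suc m) + Arg z)) \<ge> c" using output_bound[OF N] c by simp
      then have "cos (ph (Suc m) - theta (Suc m) - Arg z) \<ge> c" using phS by (simp add: algebra_simps)
      then show ?thesis using r0 by (simp add: mult_left_mono)
    qed
    have T0: "T m \<ge> 0" unfolding T_def using bpos mM by (intro sum_nonneg) (auto simp: less_imp_le)
    have B0: "B m \<ge> 0" unfolding B_def using bpos mM by (intro sum_nonneg) (auto simp: less_imp_le)
    have "(c * B m)^2 \<le> r^2"
    proof -
      have "(c * B m)^2 = c^2 * (B m)^2" by (simp add: power_mult_distrib)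
      also have "\<dots> \<le> T m + c^2 * ((B m)^2 - T m)"
      proof -
        have "c^2 \<le> 1" using c0 c1 by (simp add: power_le_one)
        then have "c^2 * T m \<le> T m" using T0 by (simp add: mult_left_le_one_le)
        then show ?thesis by (simp add: algebra_simps)
      qed
      also have "\<dots> \<le> r^2" using IH by (simp add: r_def z_def)
      finally show ?thesis .
    qed
    then have cBr: "c * B m \<le> r" using r0 by (rule power2_le_imp_le)
    have sb: "sqrt (beta (Suc m)) \<ge> 0" using bt by simp
    have p1: "2 * sqrt (beta (Suc m)) * (r * c) \<ge> 2 * sqrt (beta (Suc m)) * (c * (c * B m))"
      using cBr c0 sb by (intro mult_left_mono) (auto simp: mult_left_mono mult.commute[of r c])
    have p2: "2 * sqrt (beta (Suc m)) * (r * cos (ph (Suc m) - theta (Suc m) - Arg z)) \<ge> 2 * sqrt (beta (Suc m)) * (r * c)"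
      by (rule mult_left_mono[OF crr]) (use sb in simp)
    have TS: "T (Suc m) = T m + beta (Suc m)" "B (Suc m) = B m + sqrt (beta (Suc m))"
      by (simp_all add: T_def B_def)
    have sq: "(sqrt (beta (Suc m)))^2 = beta (Suc m)" using bt by simp
    have rIH: "r^2 \<ge> T m + c^2 * ((B m)^2 - T m)" using IH by (simp add: r_def z_def)
    have goal: "T (Suc m) + c^2 * ((B (Suc m))^2 - T (Suc m)) = beta (Suc m) + (T m + c^2 * ((B m)^2 - T m)) + 2 * sqrt (beta (Suc m)) * (c * (c * B m))"
      unfolding TS using bt by (simp add: less_imp_le power2_eq_square algebra_simps sq[unfolded power2_eq_square])
    have "(cmod (S (Suc m)))^2 = beta (Suc m) + r^2 + 2 * sqrt (beta (Suc m)) * (r * cos (ph (Suc m) - theta (Suc m) - Arg z))"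
      using expand by (simp only: mult.assoc)
    then show ?thesis using p1 p2 rIH goal by linarith
  qed
qed


theorem corollary1:
  fixes M N :: nat and beta theta :: "nat \<Rightarrow> real" and P eta_hat :: real
  assumes "M \<ge> 2"
    and "\<forall>m\<in>{1..M}. beta m > 0"
    and "\<forall>m\<in>{1..M}. -pi \<le> theta m \<and> theta m < pi"
    and "P > 0"
    and "N \<ge> 1"
    and "0 < eta_hat" and "eta_hat \<le> 1"
    and "0 \<le> eta_hat - (1 - eta_hat) * (\<Sum>m\<in>{1..M}. beta m)
                 / (\<Sum>i\<in>{1..M}. \<Sum>j\<in>{1..M}-{i}. sqrt (beta i * beta j))"
    and "eta_hat - (1 - eta_hat) * (\<Sum>m\<in>{1..M}. beta m)
                 / (\<Sum>i\<in>{1..M}. \<Sum>j\<in>{1..M}-{i}. sqrt (beta i * beta j)) < 1"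
    and "real N \<ge> log 2 (pi / arccos (sqrt (eta_hat - (1 - eta_hat) * (\<Sum>m\<in>{1..M}. beta m)
                 / (\<Sum>i\<in>{1..M}. \<Sum>j\<in>{1..M}-{i}. sqrt (beta i * beta j)))))"
  shows "eta M beta theta P N \<ge> eta_hat"
proof -
  note bpos = assms(2)
  define T where "T = (\<Sum>m\<in>{1..M}. beta m)"
  define B where "B = (\<Sum>m\<in>{1..M}. sqrt (beta m))"
  define X where "X = (\<Sum>i\<in>{1..M}. \<Sum>j\<in>{1..M}-{i}. sqrt (beta i * beta j))"
  define x where "x = eta_hat - (1 - eta_hat) * T / X"
  define c where "c = cos (pi / 2^N)"
  have x0: "0 \<le> x" and x1: "x < 1" and logN: "log 2 (pi / arccos (sqrt x)) \<le> real N"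
    using assms(8,9,10) by (simp_all add: x_def T_def X_def)
  have BTX: "B^2 = T + X"
  proof -
    have "B^2 = (\<Sum>i\<in>{1..M}. \<Sum>j\<in>{1..M}. sqrt (beta i) * sqrt (beta j))"
      unfolding B_def power2_eq_square by (simp add: sum_product)
    also have "\<dots> = (\<Sum>i\<in>{1..M}. beta i + (\<Sum>j\<in>{1..M}-{i}. sqrt (beta i * beta j)))"
    proof (rule sum.cong)
      fix i assume i: "i \<in> {1..M}"
      have "(\<Sum>j\<in>{1..M}. sqrt (beta i) * sqrt (beta j)) =
            sqrt (beta i) * sqrt (beta i) + (\<Sum>j\<in>{1..M}-{i}. sqrt (beta i) * sqrt (beta j))"
        using i by (simp add: sum.remove)
      then show "(\<Sum>j\<in>{1..M}. sqrt (beta i) * sqrt (beta j)) = beta i + (\<Sum>j\<in>{1..M}-{i}. sqrt (beta i * beta j))"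
        using i bpos by (simp add: real_sqrt_mult less_imp_le)
    qed simp
    also have "\<dots> = T + X" by (simp add: sum.distrib T_def X_def)
    finally show ?thesis .
  qed
  have Xpos: "X > 0"
  proof -
    have nn: "\<And>i. i \<in> {1..M} \<Longrightarrow> (\<Sum>j\<in>{1..M}-{i}. sqrt (beta i * beta j)) \<ge> 0" using bpos by (intro sum_nonneg) (auto simp: less_imp_le)
    have "sqrt (beta 1 * beta 2) > 0" using bpos assms(1) by simp
    also have "sqrt (beta 1 * beta 2) \<le> (\<Sum>j\<in>{1..M}-{1}. sqrt (beta 1 * beta j))"
      using assms(1) bpos by (intro member_le_sum) (auto simp: less_imp_le)
    also have "\<dots> \<le> X" unfolding X_def using assms(1) nn by (intro member_le_sum) auto
    finally show ?thesis .
  qed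
  have T0: "T \<ge> 0" unfolding T_def using bpos by (intro sum_nonneg) (auto simp: less_imp_le)
  have sx: "0 \<le> sqrt x" "sqrt x < 1" using x0 x1 by auto
  have ac: "0 < arccos (sqrt x)" "arccos (sqrt x) \<le> pi/2"
    using arccos_lt_bounded[of "sqrt x"] sx arccos_le_pi2[of "sqrt x"] by auto
  have qpos: "pi / arccos (sqrt x) > 0" using ac by simp
  have "pi / arccos (sqrt x) \<le> 2 powr real N" using logN qpos by (simp add: log_le_iff)
  then have "pi / arccos (sqrt x) \<le> 2^N" by (simp add: powr_realpow)
  then have le1: "pi / 2^N \<le> arccos (sqrt x)" using ac by (simp add: divide_le_eq mult.commute)
  have "cos (arccos (sqrt x)) \<le> cos (pi / 2^N)"
    using le1 ac by (intro cos_monotone_0_pi_le) auto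
  moreover have ca: "cos (arccos (sqrt x)) = sqrt x" using sx by (intro cos_arccos; linarith)
  ultimately have sxc: "sqrt x \<le> c" by (simp add: c_def)
  then have xc: "x \<le> c^2" using sx x0 by (metis power_mono real_sqrt_pow2)
  have mb: "(cmod (\<Sum>i\<in>{1..M}. complex_of_real (sqrt (beta i)) * cis (phases beta theta P N M i - theta i)))^2
      \<ge> T + c^2 * (B^2 - T)"
    using main_bound[OF bpos assms(4,5) c_def, of M] assms(1) unfolding T_def B_def by simp
  have eta_eq: "eta M beta theta P N = (cmod (\<Sum>i\<in>{1..M}. complex_of_real (sqrt (beta i)) * cis (phases beta theta P N M i - theta i)))^2 / B^2"
    unfolding eta_def Qd_def Qstar_def B_def using assms(4) by simp
  have Bpos: "B^2 > 0" using BTX Xpos T0 by simp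
  have "eta_hat * B^2 = T + x * X"
    unfolding x_def using BTX Xpos by (simp add: field_simps)
  also have "\<dots> \<le> T + c^2 * X" using xc Xpos by (simp add: mult_right_mono)
  also have "\<dots> \<le> (cmod (\<Sum>i\<in>{1..M}. complex_of_real (sqrt (beta i)) * cis (phases beta theta P N M i - theta i)))^2"
    using mb BTX by simp
  finally show ?thesis unfolding eta_eq using Bpos by (simp add: le_divide_eq)
qed

end
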